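(* Let a motion digraph $\mathcal{M}=(\mathbb{Z}_\varkappa,\mathcal{W})$, an infection probability $\alpha\in[0,1]$ and a recovery probability $\beta\in[0,1]$ be given, and consider the agent-based SIR model with $N$ mobile agents described below. Then there exists a stochastic digraph $\boldsymbol{\mathcal{SIRM}}$ whose stochastic directed paths are in one-to-one correspondence with the trajectories of the agent-based SIR model with mobile agents.
   Context: Agent-based SIR model: agent $i\in\{1,\dots,N\}$ has state $(\sigma_i,\varpi_i)$ with $\sigma_i\in\{1,2,3\}$ (susceptible, infected, recovered) and position $\varpi_i\in\mathbb{Z}_\varkappa$. Positions evolve by $\varpi_i^+\in\mathcal{N}^o(\varpi_i)$, where $\mathcal{N}^o(\varpi)=\{y:(\varpi,y)\in\mathcal{W}\}$ is the out-neighborhood in $\mathcal{M}$ (the choice among out-neighbors is arbitrary, i.e., nondeterministic). Epidemic states evolve by $\sigma_i^+=G_i(\sigma,\varpi,u_i,v_i)$ with $G_i=1$ if $\sigma_i=1$ and there is no $j\neq i$ with $\varpi_i=\varpi_j$, $\sigma_j=2$ and $[u_i]_j=2$; $G_i=2$ if $\sigma_i=1$ and such a $j$ exists; $G_i=v_i+1$ if $\sigma_i=2$; $G_i=3$ if $\sigma_i=3$. Here $(\boldsymbol{u_i})_k\in\{1,2\}^N$ and $(\boldsymbol{v_i})_k\in\{1,2\}$, $i=1,\dots,N$, are sequences of i.i.d. random variables with $\mathbb{P}([(\boldsymbol{u_i})_k]_j=2)=\alpha$ for each $j$ and $\mathbb{P}((\boldsymbol{v_i})_k=2)=\beta$ (the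 infection events being independent). A stochastic digraph is a triple $(\mathbb{Z}_{n},\{\mathcal{E}_s\}_{s=1}^h,\mu)$ with $\mathcal{E}_s\subset\mathbb{Z}_n\times\mathbb{Z}_n$ and $\mu$ the common distribution of an i.i.d. sequence $\boldsymbol{w}_k:\Omega\to\mathbb{Z}_h$ on a probability space; with $H(x,w)=\{y:(x,y)\in\mathcal{E}_w\}$, a stochastic directed path from $x$ is a map $\omega\mapsto\{\boldsymbol{x}_k(\omega)\}_{k}$ with $\boldsymbol{x}_0=x$, $\boldsymbol{x}_{k+1}(\omega)\in H(\boldsymbol{x}_k(\omega),\boldsymbol{w}_k(\omega))$, and $\boldsymbol{x}_{k+1}$ measurable with respect to $\sigma(\boldsymbol{w}_0,\dots,\boldsymbol{w}_k)$. *)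

theory Defs
  imports "HOL-Probability.Probability"
begin

text \<open>Agents are indexed by 0..N-1, positions by Z_kappa = {0..<kappa}.
  A model state is a pair (sigma, varpi) of lists of length N, sigma entries in {1,2,3}.\<close>

definition sir_states :: "nat \<Rightarrow> nat \<Rightarrow> (nat list \<times> nat list) set" where
  "sir_states N \<kappa> = {(s, p). length s = N \<and> length p = N \<and> set s \<subseteq> {1,2,3} \<and> set p \<subseteq> {..<\<kappa>}}"

definition out_nbhd :: "(nat \<times> nat) set \<Rightarrow> nat \<Rightarrow> nat set" where
  "out_nbhd W x = {y. (x, y) \<in> W}"

definition sir_G :: "nat \<Rightarrow> nat list \<Rightarrow> nat list \<Rightarrow> (nat \<Rightarrow> nat) \<Rightarrow> nat \<Rightarrow> nat" where
  "sir_G i s p ui vi =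
     (if s ! i = 1 then
        (if \<exists>j<length s. j \<noteq> i \<and> p ! i = p ! j \<and> s ! j = 2 \<and> ui j = 2 then 2 else 1)
      else if s ! i = 2 then vi + 1
      else 3)"

text \<open>Noise random variables: u i k \<omega> j = [(u_i)_k]_j and v i k \<omega> = (v_i)_k, all mutually
  independent, with values in {1,2}, P([(u_i)_k]_j = 2) = alpha, P((v_i)_k = 2) = beta.\<close>
definition sir_noise_family ::
  "nat \<Rightarrow> (nat \<Rightarrow> nat \<Rightarrow> 'a \<Rightarrow> nat \<Rightarrow> nat) \<Rightarrow> (nat \<Rightarrow> nat \<Rightarrow> 'a \<Rightarrow> nat)
    \<Rightarrow> (nat \<times> nat \<times> nat) + (nat \<times> nat) \<Rightarrow> 'a \<Rightarrow> nat" where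
  "sir_noise_family N u v idx = (case idx of Inl (i, j, k) \<Rightarrow> (\<lambda>\<omega>. u i k \<omega> j)
                                           | Inr (i, k) \<Rightarrow> (\<lambda>\<omega>. v i k \<omega>))"

definition sir_noise_index :: "nat \<Rightarrow> ((nat \<times> nat \<times> nat) + (nat \<times> nat)) set" where
  "sir_noise_index N = {Inl (i, j, k) | i j k. i < N \<and> j < N} \<union> {Inr (i, k) | i k. i < N}"

definition sir_noise ::
  "'a measure \<Rightarrow> nat \<Rightarrow> real \<Rightarrow> real \<Rightarrow> (nat \<Rightarrow> nat \<Rightarrow> 'a \<Rightarrow> nat \<Rightarrow> nat) \<Rightarrow> (nat \<Rightarrow> nat \<Rightarrow> 'a \<Rightarrow> nat) \<Rightarrow> bool" where
  "sir_noise M N \<alpha> \<beta> u v \<longleftrightarrow>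
     prob_space M \<and>
     prob_space.indep_vars M (\<lambda>_. count_space UNIV) (sir_noise_family N u v) (sir_noise_index N) \<and>
     (\<forall>i<N. \<forall>j<N. \<forall>k. \<forall>\<omega>\<in>space M. u i k \<omega> j \<in> {1, 2}) \<and>
     (\<forall>i<N. \<forall>k. \<forall>\<omega>\<in>space M. v i k \<omega> \<in> {1, 2}) \<and>
     (\<forall>i<N. \<forall>j<N. \<forall>k. measure M {\<omega> \<in> space M. u i k \<omega> j = 2} = \<alpha>) \<and>
     (\<forall>i<N. \<forall>k. measure M {\<omega> \<in> space M. v i k \<omega> = 2} = \<beta>)"

definition sir_noise_at ::
  "nat \<Rightarrow> (nat \<Rightarrow> nat \<Rightarrow> 'a \<Rightarrow> nat \<Rightarrow> nat) \<Rightarrow> (nat \<Rightarrow> nat \<Rightarrow> 'a \<Rightarrow> nat) \<Rightarrow> nat \<Rightarrow> 'a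
     \<Rightarrow> nat list list \<times> nat list" where
  "sir_noise_at N u v k \<omega> =
     (map (\<lambda>i. map (\<lambda>j. u i k \<omega> j) [0..<N]) [0..<N], map (\<lambda>i. v i k \<omega>) [0..<N])"

definition noise_vals :: "nat \<Rightarrow> (nat list list \<times> nat list) set" where
  "noise_vals N = {(U, V). length U = N \<and> (\<forall>r\<in>set U. length r = N \<and> set r \<subseteq> {1, 2})
                           \<and> length V = N \<and> set V \<subseteq> {1, 2}}"

text \<open>Values outside space M are fixed to undefined (extensionality).\<close>
definition sir_traj ::
  "'a measure \<Rightarrow> nat \<Rightarrow> (nat \<times> nat) set \<Rightarrow> (nat \<Rightarrow> nat \<Rightarrow> 'a \<Rightarrow> nat \<Rightarrow> nat) \<Rightarrow> (nat \<Rightarrow> nat \<Rightarrow> 'a \<Rightarrow> nat)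
     \<Rightarrow> nat list \<times> nat list \<Rightarrow> (nat \<Rightarrow> 'a \<Rightarrow> nat list \<times> nat list) set" where
  "sir_traj M N W u v x =
     {X. (\<forall>\<omega>\<in>space M. X 0 \<omega> = x) \<and>
         (\<forall>k. \<forall>\<omega>\<in>space M.
            length (fst (X (Suc k) \<omega>)) = N \<and> length (snd (X (Suc k) \<omega>)) = N \<and>
            (\<forall>i<N. snd (X (Suc k) \<omega>) ! i \<in> out_nbhd W (snd (X k \<omega>) ! i) \<and>
                   fst (X (Suc k) \<omega>) ! i =
                     sir_G i (fst (X k \<omega>)) (snd (X k \<omega>)) (u i k \<omega>) (v i k \<omega>))) \<and>
         (\<forall>k. X (Suc k) \<in> measurable
                (vimage_algebra (space M) (\<lambda>\<omega>. map (\<lambda>j. sir_noise_at N u v j \<omega>) [0..<Suc k])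
                   (count_space UNIV))
                (count_space UNIV)) \<and>
         (\<forall>k. \<forall>\<omega>. \<omega> \<notin> space M \<longrightarrow> X k \<omega> = undefined)}"

text \<open>Stochastic digraph (Z_n, {E_s}_{s in Z_h}, mu) with i.i.d. driving sequence w_k : Omega \<rightarrow> Z_h
  of common distribution mu (given by its mass function).\<close>
definition stoch_digraph ::
  "'a measure \<Rightarrow> nat \<Rightarrow> nat \<Rightarrow> (nat \<Rightarrow> (nat \<times> nat) set) \<Rightarrow> (nat \<Rightarrow> real) \<Rightarrow> (nat \<Rightarrow> 'a \<Rightarrow> nat) \<Rightarrow> bool" where
  "stoch_digraph M n h E \<mu> w \<longleftrightarrow>
     prob_space M \<and>
     (\<forall>s<h. E s \<subseteq> {..<n} \<times> {..<n}) \<and>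
     (\<forall>k. \<forall>\<omega>\<in>space M. w k \<omega> < h) \<and>
     prob_space.indep_vars M (\<lambda>_. count_space UNIV) w UNIV \<and>
     (\<forall>k s. measure M {\<omega> \<in> space M. w k \<omega> = s} = \<mu> s)"

definition sd_paths ::
  "'a measure \<Rightarrow> (nat \<Rightarrow> (nat \<times> nat) set) \<Rightarrow> (nat \<Rightarrow> 'a \<Rightarrow> nat) \<Rightarrow> nat \<Rightarrow> (nat \<Rightarrow> 'a \<Rightarrow> nat) set" where
  "sd_paths M E w x =
     {X. (\<forall>\<omega>\<in>space M. X 0 \<omega> = x) \<and>
         (\<forall>k. \<forall>\<omega>\<in>space M. (X k \<omega>, X (Suc k) \<omega>) \<in> E (w k \<omega>)) \<and>
         (\<forall>k. X (Suc k) \<in> measurable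
                (vimage_algebra (space M) (\<lambda>\<omega>. map (\<lambda>j. w j \<omega>) [0..<Suc k]) (count_space UNIV))
                (count_space UNIV)) \<and>
         (\<forall>k. \<forall>\<omega>. \<omega> \<notin> space M \<longrightarrow> X k \<omega> = undefined)}"

end

theory Submission
  imports Defs
begin


definition Ik :: "nat \<Rightarrow> nat \<Rightarrow> ((nat \<times> nat \<times> nat) + (nat \<times> nat)) set" where
  "Ik N k = {Inl (i, j, k) | i j. i < N \<and> j < N} \<union> {Inr (i, k) | i. i < N}"

definition stepR :: "(nat \<times> nat) set \<Rightarrow> nat \<Rightarrow> nat list list \<times> nat list \<Rightarrow> nat list \<times> nat list \<Rightarrow> nat list \<times> nat list \<Rightarrow> bool" where
  "stepR W N z x y \<longleftrightarrow> length (fst y) = N \<and> length (snd y) = N \<and>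
     (\<forall>i<N. snd y ! i \<in> out_nbhd W (snd x ! i) \<and>
        fst y ! i = sir_G i (fst x) (snd x) (\<lambda>j. fst z ! i ! j) (snd z ! i))"

lemma PiM_count_all:
  fixes I :: "'i set"
  assumes "finite I" "A \<subseteq> space (PiM I (\<lambda>_. count_space (UNIV::nat set)))"
  shows "A \<in> sets (PiM I (\<lambda>_. count_space (UNIV::nat set)))"
proof -
  have sp: "space (PiM I (\<lambda>_. count_space (UNIV::nat set))) = PiE I (\<lambda>_. UNIV)"
    by (simp add: space_PiM)
  have "countable (PiE I (\<lambda>_. (UNIV::nat set)))" by (rule countable_PiE) (auto simp: assms(1))
  hence cA: "countable A" using assms(2) sp countable_subset by metis
  have eq: "A = (\<Union>f\<in>A. PiE I (\<lambda>i. {f i}))"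
  proof -
    have "PiE I (\<lambda>i. {f i}) = {f}" if "f \<in> A" for f
      using that assms(2) sp by (intro PiE_singleton) (auto simp: PiE_def)
    thus ?thesis by auto
  qed
  have "(\<Union>f\<in>A. PiE I (\<lambda>i. {f i})) \<in> sets (PiM I (\<lambda>_. count_space (UNIV::nat set)))"
    by (rule sets.countable_UN''[OF cA]) (auto intro!: sets_PiM_I_finite assms(1))
  thus ?thesis using eq by simp
qed

lemma PiM_count_meas:
  fixes I :: "'i set"
  assumes "finite I"
  shows "g \<in> measurable (PiM I (\<lambda>_. count_space (UNIV::nat set))) (count_space UNIV)"
  using assms by (auto simp: measurable_def intro!: PiM_count_all)

lemma meas_if_comp:
  assumes "f \<in> measurable A (count_space UNIV)"
  shows "(\<lambda>\<omega>. if \<omega> \<in> space A then g (f \<omega>) else undefined) \<in> measurable A (count_space UNIV)"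
proof -
  have "(\<lambda>\<omega>. if \<omega> \<in> space A then g (f \<omega>) else undefined) -` B \<inter> space A = f -` (g -` B) \<inter> space A" for B
    by auto
  thus ?thesis using assms by (auto simp: measurable_def)
qed

lemma vimage_sets_eq:
  assumes "\<And>\<omega>. f \<omega> = g (f' \<omega>)" "\<And>\<omega>. f' \<omega> = g' (f \<omega>)"
  shows "sets (vimage_algebra \<Omega> f (count_space UNIV)) = sets (vimage_algebra \<Omega> f' (count_space UNIV))"
proof -
  have 1: "f -` A \<inter> \<Omega> = f' -` (g -` A) \<inter> \<Omega>" for A using assms(1) by auto
  have 2: "f' -` A \<inter> \<Omega> = f -` (g' -` A) \<inter> \<Omega>" for A using assms(2) by auto
  have "{f -` A \<inter> \<Omega> |A. A \<in> sets (count_space UNIV)} = {f' -` A \<inter> \<Omega> |A. A \<in> sets (count_space UNIV)}"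
  proof (intro equalityI subsetI)
    fix B assume "B \<in> {f -` A \<inter> \<Omega> |A. A \<in> sets (count_space UNIV)}"
    then obtain A where "B = f -` A \<inter> \<Omega>" by blast
    hence "B = f' -` (g -` A) \<inter> \<Omega>" using 1 by simp
    thus "B \<in> {f' -` A \<inter> \<Omega> |A. A \<in> sets (count_space UNIV)}"
      by (intro CollectI exI[where x="g -` A"]) simp
  next
    fix B assume "B \<in> {f' -` A \<inter> \<Omega> |A. A \<in> sets (count_space UNIV)}"
    then obtain A where "B = f' -` A \<inter> \<Omega>" by blast
    hence "B = f -` (g' -` A) \<inter> \<Omega>" using 2 by simp
    thus "B \<in> {f -` A \<inter> \<Omega> |A. A \<in> sets (count_space UNIV)}"
      by (intro CollectI exI[where x="g' -` A"]) simp
  qed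
  thus ?thesis by (simp add: sets_vimage_algebra2)
qed

lemma G_cong:
  assumes "\<forall>j<length s. ui j = ui' j"
  shows "sir_G i s p ui vi = sir_G i s p ui' vi"
proof -
  have "(\<exists>j<length s. j \<noteq> i \<and> p ! i = p ! j \<and> s ! j = 2 \<and> ui j = 2) =
        (\<exists>j<length s. j \<noteq> i \<and> p ! i = p ! j \<and> s ! j = 2 \<and> ui' j = 2)" using assms by auto
  thus ?thesis by (simp add: sir_G_def)
qed

lemma G_range: "vi \<in> {1,2} \<Longrightarrow> sir_G i s p ui vi \<in> {1,2,3}"
  by (auto simp: sir_G_def)

lemma step_iff:
  assumes "length (fst x) = N"
  shows "stepR W N (sir_noise_at N u v k \<omega>) x y \<longleftrightarrow>
    (length (fst y) = N \<and> length (snd y) = N \<and>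
     (\<forall>i<N. snd y ! i \<in> out_nbhd W (snd x ! i) \<and>
            fst y ! i = sir_G i (fst x) (snd x) (u i k \<omega>) (v i k \<omega>)))"
proof -
  have eq: "sir_G i (fst x) (snd x) (\<lambda>j. fst (sir_noise_at N u v k \<omega>) ! i ! j) (snd (sir_noise_at N u v k \<omega>) ! i)
      = sir_G i (fst x) (snd x) (u i k \<omega>) (v i k \<omega>)" if i: "i < N" for i
  proof -
    have 1: "snd (sir_noise_at N u v k \<omega>) ! i = v i k \<omega>" using i by (simp add: sir_noise_at_def)
    have "\<forall>j<length (fst x). fst (sir_noise_at N u v k \<omega>) ! i ! j = u i k \<omega> j"
      using assms i by (simp add: sir_noise_at_def)
    hence "sir_G i (fst x) (snd x) (\<lambda>j. fst (sir_noise_at N u v k \<omega>) ! i ! j) (v i k \<omega>)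
        = sir_G i (fst x) (snd x) (u i k \<omega>) (v i k \<omega>)" by (rule G_cong)
    thus ?thesis using 1 by simp
  qed
  show ?thesis unfolding stepR_def by (simp add: eq)
qed

lemma noise_at_vals:
  assumes "sir_noise M N \<alpha> \<beta> u v" "\<omega> \<in> space M"
  shows "sir_noise_at N u v k \<omega> \<in> noise_vals N"
proof -
  have u: "\<forall>i<N. \<forall>j<N. \<forall>k. \<forall>\<omega>\<in>space M. u i k \<omega> j \<in> {1, 2}"
    and v: "\<forall>i<N. \<forall>k. \<forall>\<omega>\<in>space M. v i k \<omega> \<in> {1, 2}"
    using assms(1) unfolding sir_noise_def by blast+
  have u': "u i k \<omega> j \<in> {1,2}" if "i < N" "j < N" for i j using u that assms(2) by blast
  have v': "v i k \<omega> \<in> {1,2}" if "i < N" for i using v that assms(2) by blast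
  have "\<forall>r\<in>set (map (\<lambda>i. map (\<lambda>j. u i k \<omega> j) [0..<N]) [0..<N]). length r = N \<and> set r \<subseteq> {1, 2}"
  proof
    fix r assume "r \<in> set (map (\<lambda>i. map (\<lambda>j. u i k \<omega> j) [0..<N]) [0..<N])"
    then obtain i where i: "i < N" "r = map (\<lambda>j. u i k \<omega> j) [0..<N]" by auto
    have "set r \<subseteq> {1,2}"
    proof
      fix a assume "a \<in> set r"
      then obtain j where "j < N" "a = u i k \<omega> j" using i by auto
      thus "a \<in> {1,2}" using u' i by blast
    qed
    thus "length r = N \<and> set r \<subseteq> {1, 2}" using i by simp
  qed
  moreover have "set (map (\<lambda>i. v i k \<omega>) [0..<N]) \<subseteq> {1, 2}"
  proof
    fix a assume "a \<in> set (map (\<lambda>i. v i k \<omega>) [0..<N])"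
    then obtain i where "i < N" "a = v i k \<omega>" by auto
    thus "a \<in> {1,2}" using v' by blast
  qed
  ultimately show ?thesis unfolding sir_noise_at_def noise_vals_def by simp
qed

lemma step_states:
  assumes "W \<subseteq> {..<\<kappa>} \<times> {..<\<kappa>}" "x \<in> sir_states N \<kappa>" "z \<in> noise_vals N" "stepR W N z x y"
  shows "y \<in> sir_states N \<kappa>"
proof -
  obtain sy py where y: "y = (sy, py)" by (cases y)
  have len: "length sy = N" "length py = N" using assms(4) y unfolding stepR_def by auto
  have A: "sy ! i \<in> {1,2,3}" if "i < N" for i
  proof -
    have "snd z ! i \<in> set (snd z)" using that assms(3) by (auto simp: noise_vals_def)
    hence "snd z ! i \<in> {1,2}" using assms(3) by (auto simp: noise_vals_def)
    hence "sir_G i (fst x) (snd x) (\<lambda>j. fst z ! i ! j) (snd z ! i) \<in> {1,2,3}" by (rule G_range)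
    thus ?thesis using assms(4) that y unfolding stepR_def by auto
  qed
  have B: "py ! i < \<kappa>" if "i < N" for i
    using assms(1,4) that y unfolding stepR_def out_nbhd_def by auto
  have "set sy \<subseteq> {1,2,3}"
  proof
    fix a assume "a \<in> set sy"
    then obtain i where "i < length sy" "sy ! i = a" by (auto simp: in_set_conv_nth)
    thus "a \<in> {1,2,3}" using A len by metis
  qed
  moreover have "set py \<subseteq> {..<\<kappa>}"
  proof
    fix a assume "a \<in> set py"
    then obtain i where "i < length py" "py ! i = a" by (auto simp: in_set_conv_nth)
    thus "a \<in> {..<\<kappa>}" using B len by auto
  qed
  ultimately show ?thesis using len y unfolding sir_states_def by auto
qed


definition nval :: "nat list list \<times> nat list \<Rightarrow> (nat \<times> nat \<times> nat) + (nat \<times> nat) \<Rightarrow> nat" where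
  "nval z idx = (case idx of Inl (i, j, _) \<Rightarrow> fst z ! i ! j | Inr (i, _) \<Rightarrow> snd z ! i)"

definition pv :: "real \<Rightarrow> nat \<Rightarrow> real" where
  "pv a c = (if c = 2 then a else 1 - a)"

definition nprob :: "real \<Rightarrow> real \<Rightarrow> nat list list \<times> nat list \<Rightarrow> (nat \<times> nat \<times> nat) + (nat \<times> nat) \<Rightarrow> real" where
  "nprob a b z idx = (case idx of Inl (i, j, _) \<Rightarrow> pv a (fst z ! i ! j) | Inr (i, _) \<Rightarrow> pv b (snd z ! i))"

definition shiftk :: "nat \<Rightarrow> (nat \<times> nat \<times> nat) + (nat \<times> nat) \<Rightarrow> (nat \<times> nat \<times> nat) + (nat \<times> nat)" where
  "shiftk k idx = (case idx of Inl (i, j, _) \<Rightarrow> Inl (i, j, k) | Inr (i, _) \<Rightarrow> Inr (i, k))"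

lemma Ik_sub: "Ik N k \<subseteq> sir_noise_index N"
  by (auto simp: Ik_def sir_noise_index_def)

lemma Ik_finite: "finite (Ik N k)"
proof -
  have "Ik N k \<subseteq> Inl ` ({..<N} \<times> {..<N} \<times> {k}) \<union> Inr ` ({..<N} \<times> {k})"
    by (auto simp: Ik_def)
  thus ?thesis by (rule finite_subset) auto
qed

lemma fam_rv:
  assumes "sir_noise M N \<alpha> \<beta> u v" "idx \<in> sir_noise_index N"
  shows "sir_noise_family N u v idx \<in> measurable M (count_space UNIV)"
proof -
  interpret prob_space M using assms(1) by (simp add: sir_noise_def)
  have "indep_vars (\<lambda>_. count_space UNIV) (sir_noise_family N u v) (sir_noise_index N)"
    using assms(1) by (simp add: sir_noise_def)
  thus ?thesis using assms(2) by (simp add: indep_vars_def)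
qed

lemma single_prob:
  assumes noise: "sir_noise M N \<alpha> \<beta> u v" and idx: "idx \<in> Ik N k" and z: "z \<in> noise_vals N"
  shows "measure M (sir_noise_family N u v idx -` {nval z idx} \<inter> space M) = nprob \<alpha> \<beta> z idx"
proof -
  interpret prob_space M using noise by (simp add: sir_noise_def)
  have rv: "sir_noise_family N u v idx \<in> measurable M (count_space UNIV)"
    using fam_rv[OF noise] Ik_sub idx by blast
  have ev2: "sir_noise_family N u v idx -` {2} \<inter> space M \<in> events"
    by (rule measurable_sets[OF rv]) simp
  have vals: "\<forall>\<omega>\<in>space M. sir_noise_family N u v idx \<omega> \<in> {1,2}"
    and p2: "measure M (sir_noise_family N u v idx -` {2} \<inter> space M) = (case idx of Inl _ \<Rightarrow> \<alpha> | Inr _ \<Rightarrow> \<beta>)"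
    and nv: "nval z idx \<in> {1,2}"
  proof -
    consider (L) i j where "idx = Inl (i, j, k)" "i < N" "j < N" | (R) i where "idx = Inr (i, k)" "i < N"
      using idx by (auto simp: Ik_def)
    then have "(\<forall>\<omega>\<in>space M. sir_noise_family N u v idx \<omega> \<in> {1,2}) \<and>
       measure M (sir_noise_family N u v idx -` {2} \<inter> space M) = (case idx of Inl _ \<Rightarrow> \<alpha> | Inr _ \<Rightarrow> \<beta>) \<and>
       nval z idx \<in> {1,2}"
    proof cases
      case L
      have "fst z ! i \<in> set (fst z)" using z L by (auto simp: noise_vals_def)
      moreover have "fst z ! i ! j \<in> set (fst z ! i)" using z L \<open>fst z ! i \<in> set (fst z)\<close>
        by (auto simp: noise_vals_def)
      ultimately have "fst z ! i ! j \<in> {1,2}" using z by (auto simp: noise_vals_def)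
      moreover have "sir_noise_family N u v idx -` {2} \<inter> space M = {\<omega> \<in> space M. u i k \<omega> j = 2}"
        using L by (auto simp: sir_noise_family_def)
      ultimately show ?thesis using L noise by (auto simp: sir_noise_family_def sir_noise_def nval_def)
    next
      case R
      have "snd z ! i \<in> set (snd z)" using z R by (auto simp: noise_vals_def)
      hence "snd z ! i \<in> {1,2}" using z by (auto simp: noise_vals_def)
      moreover have "sir_noise_family N u v idx -` {2} \<inter> space M = {\<omega> \<in> space M. v i k \<omega> = 2}"
        using R by (auto simp: sir_noise_family_def)
      ultimately show ?thesis using R noise by (auto simp: sir_noise_family_def sir_noise_def nval_def)
    qed
    thus "\<forall>\<omega>\<in>space M. sir_noise_family N u v idx \<omega> \<in> {1,2}"
      "measure M (sir_noise_family N u v idx -` {2} \<inter> space M) = (case idx of Inl _ \<Rightarrow> \<alpha> | Inr _ \<Rightarrow> \<beta>)"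
      "nval z idx \<in> {1,2}" by auto
  qed
  have pc: "nprob \<alpha> \<beta> z idx = pv (case idx of Inl _ \<Rightarrow> \<alpha> | Inr _ \<Rightarrow> \<beta>) (nval z idx)"
    by (auto simp: nprob_def nval_def split: sum.splits)
  show ?thesis
  proof (cases "nval z idx = 2")
    case True
    thus ?thesis using p2 pc by (simp add: pv_def)
  next
    case False
    hence one: "nval z idx = 1" using nv by auto
    have "sir_noise_family N u v idx -` {nval z idx} \<inter> space M
        = space M - (sir_noise_family N u v idx -` {2} \<inter> space M)"
      using vals one by auto
    hence "measure M (sir_noise_family N u v idx -` {nval z idx} \<inter> space M)
        = 1 - measure M (sir_noise_family N u v idx -` {2} \<inter> space M)"
      using prob_compl[OF ev2] by simp
    thus ?thesis using p2 pc one by (simp add: pv_def)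
  qed
qed

lemma map_nested_eq:
  assumes "length U = N" "\<forall>r\<in>set U. length r = N"
  shows "(map (\<lambda>i. map (\<lambda>j. f i j) [0..<N]) [0..<N] = U) \<longleftrightarrow> (\<forall>i<N. \<forall>j<N. f i j = U ! i ! j)"
proof -
  have l: "\<forall>i<N. length (U ! i) = N" using assms by auto
  have "(map (\<lambda>i. map (\<lambda>j. f i j) [0..<N]) [0..<N] = U) \<longleftrightarrow> (\<forall>i<N. map (\<lambda>j. f i j) [0..<N] = U ! i)"
    using assms(1) by (auto simp: list_eq_iff_nth_eq)
  also have "\<dots> \<longleftrightarrow> (\<forall>i<N. \<forall>j<N. f i j = U ! i ! j)"
    using l by (auto simp: list_eq_iff_nth_eq)
  finally show ?thesis .
qed

lemma map_eq_nth: "length V = N \<Longrightarrow> (map f [0..<N] = V) \<longleftrightarrow> (\<forall>i<N. f i = V ! i)"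
  by (auto simp: list_eq_iff_nth_eq)

lemma Ik_all: "(\<forall>idx\<in>Ik N k. P idx) \<longleftrightarrow> (\<forall>i<N. \<forall>j<N. P (Inl (i, j, k))) \<and> (\<forall>i<N. P (Inr (i, k)))"
  by (auto simp: Ik_def)

lemma noise_event:
  assumes "N > 0" "z \<in> noise_vals N"
  shows "{\<omega> \<in> space M. sir_noise_at N u v k \<omega> = z} =
         (\<Inter>idx\<in>Ik N k. sir_noise_family N u v idx -` {nval z idx} \<inter> space M)"
proof -
  obtain U V where zUV: "z = (U, V)" by (cases z)
  have lens: "length U = N" "\<forall>r\<in>set U. length r = N" "length V = N"
    using assms(2) zUV by (auto simp: noise_vals_def)
  have ne: "Inr (0, k) \<in> Ik N k" using assms(1) by (auto simp: Ik_def)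
  have "\<omega> \<in> (\<Inter>idx\<in>Ik N k. sir_noise_family N u v idx -` {nval z idx} \<inter> space M) \<longleftrightarrow>
        \<omega> \<in> space M \<and> (\<forall>idx\<in>Ik N k. sir_noise_family N u v idx \<omega> = nval z idx)" for \<omega>
    using ne by blast
  also have "\<dots> \<omega> \<longleftrightarrow> \<omega> \<in> space M \<and> (\<forall>i<N. \<forall>j<N. u i k \<omega> j = U ! i ! j) \<and> (\<forall>i<N. v i k \<omega> = V ! i)" for \<omega>
    unfolding Ik_all by (simp add: sir_noise_family_def nval_def zUV)
  also have "\<dots> \<omega> \<longleftrightarrow> \<omega> \<in> {\<omega> \<in> space M. sir_noise_at N u v k \<omega> = z}" for \<omega>
    using lens by (simp add: sir_noise_at_def zUV map_nested_eq map_eq_nth)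
  finally show ?thesis by blast
qed

lemma noise_prob:
  assumes noise: "sir_noise M N \<alpha> \<beta> u v" and N: "N > 0" and z: "z \<in> noise_vals N"
  shows "measure M {\<omega> \<in> space M. sir_noise_at N u v k \<omega> = z} = (\<Prod>idx\<in>Ik N 0. nprob \<alpha> \<beta> z idx)"
proof -
  interpret prob_space M using noise by (simp add: sir_noise_def)
  have ind: "indep_vars (\<lambda>_. count_space UNIV) (sir_noise_family N u v) (sir_noise_index N)"
    using noise by (simp add: sir_noise_def)
  have ne: "Ik N k \<noteq> {}" using N by (auto simp: Ik_def)
  have "measure M {\<omega> \<in> space M. sir_noise_at N u v k \<omega> = z}
      = measure M (\<Inter>idx\<in>Ik N k. sir_noise_family N u v idx -` {nval z idx} \<inter> space M)"
    by (simp only: noise_event[OF N z])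
  also have "\<dots> = (\<Prod>idx\<in>Ik N k. measure M (sir_noise_family N u v idx -` {nval z idx} \<inter> space M))"
    by (rule indep_varsD[OF ind ne Ik_finite Ik_sub]) simp
  also have "\<dots> = (\<Prod>idx\<in>Ik N k. nprob \<alpha> \<beta> z idx)"
    by (rule prod.cong) (simp_all add: single_prob[OF noise _ z])
  also have "\<dots> = (\<Prod>idx\<in>Ik N 0. nprob \<alpha> \<beta> z (shiftk k idx))"
  proof -
    have "bij_betw (shiftk k) (Ik N 0) (Ik N k)"
      by (rule bij_betw_byWitness[where f'="shiftk 0"]) (auto simp: Ik_def shiftk_def)
    thus ?thesis by (rule prod.reindex_bij_betw[symmetric])
  qed
  also have "\<dots> = (\<Prod>idx\<in>Ik N 0. nprob \<alpha> \<beta> z idx)"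
    by (rule prod.cong) (auto simp: nprob_def shiftk_def split: sum.splits)
  finally show ?thesis .
qed

lemma w_dist:
  assumes noise: "sir_noise M N \<alpha> \<beta> u v"
  shows "measure M {\<omega> \<in> space M. to_nat (sir_noise_at N u v k \<omega>) = s}
       = measure M {\<omega> \<in> space M. to_nat (sir_noise_at N u v 0 \<omega>) = s}"
proof (cases "N = 0")
  case True
  hence "sir_noise_at N u v k \<omega> = sir_noise_at N u v 0 \<omega>" for \<omega> by (simp add: sir_noise_at_def)
  thus ?thesis by simp
next
  case False
  show ?thesis
  proof (cases "\<exists>z\<in>noise_vals N. to_nat z = s")
    case True
    then obtain z where z: "z \<in> noise_vals N" "to_nat z = s" by blast
    have "{\<omega> \<in> space M. to_nat (sir_noise_at N u v m \<omega>) = s} = {\<omega> \<in> space M. sir_noise_at N u v m \<omega> = z}" for m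
      using z by auto
    thus ?thesis using noise_prob[OF noise _ z(1)] False by simp
  next
    case False
    have e: "{\<omega> \<in> space M. to_nat (sir_noise_at N u v m \<omega>) = s} = {}" for m
      using False noise_at_vals[OF noise] by blast
    show ?thesis by (simp only: e)
  qed
qed

lemma w_indep:
  assumes noise: "sir_noise M N \<alpha> \<beta> u v"
  shows "prob_space.indep_vars M (\<lambda>_. count_space UNIV) (\<lambda>k \<omega>. to_nat (sir_noise_at N u v k \<omega>)) UNIV"
proof -
  interpret prob_space M using noise by (simp add: sir_noise_def)
  have ind: "indep_vars (\<lambda>_. count_space UNIV) (sir_noise_family N u v) (sir_noise_index N)"
    using noise by (simp add: sir_noise_def)
  have R: "indep_vars (\<lambda>k. PiM (Ik N k) (\<lambda>_. count_space UNIV))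
             (\<lambda>k \<omega>. restrict (\<lambda>i. sir_noise_family N u v i \<omega>) (Ik N k)) UNIV"
    by (rule indep_vars_restrict[OF ind Ik_sub]) (auto simp: disjoint_family_on_def Ik_def)
  define Y where "Y k f = to_nat (map (\<lambda>i. map (\<lambda>j. f (Inl (i, j, k))) [0..<N]) [0..<N],
                                  map (\<lambda>i. f (Inr (i, k))) [0..<N])"
    for k and f :: "(nat \<times> nat \<times> nat) + (nat \<times> nat) \<Rightarrow> nat"
  have "indep_vars (\<lambda>_. count_space UNIV)
          (\<lambda>k \<omega>. Y k (restrict (\<lambda>i. sir_noise_family N u v i \<omega>) (Ik N k))) UNIV"
    by (rule indep_vars_compose2[OF R]) (rule PiM_count_meas[OF Ik_finite])
  moreover have "(\<lambda>k \<omega>. Y k (restrict (\<lambda>i. sir_noise_family N u v i \<omega>) (Ik N k)))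
               = (\<lambda>k \<omega>. to_nat (sir_noise_at N u v k \<omega>))"
    by (intro ext) (simp add: Y_def sir_noise_at_def Ik_def sir_noise_family_def cong: map_cong)
  ultimately show ?thesis by simp
qed



lemma fin_states: "finite (sir_states N \<kappa>)"
proof -
  have "sir_states N \<kappa> \<subseteq> {s. set s \<subseteq> {1,2,3} \<and> length s = N} \<times> {p. set p \<subseteq> {..<\<kappa>} \<and> length p = N}"
    by (auto simp: sir_states_def)
  moreover have "finite ({s. set s \<subseteq> {1::nat,2,3} \<and> length s = N} \<times> {p. set p \<subseteq> {..<\<kappa>} \<and> length p = N})"
    by (intro finite_cartesian_product finite_lists_length_eq) auto
  ultimately show ?thesis by (rule finite_subset)
qed

lemma fin_noise: "finite (noise_vals N)"
proof -
  define R where "R = {r. set r \<subseteq> {1::nat,2} \<and> length r = N}"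
  have fR: "finite R" unfolding R_def by (intro finite_lists_length_eq) auto
  have "noise_vals N \<subseteq> {U. set U \<subseteq> R \<and> length U = N} \<times> {V. set V \<subseteq> {1,2} \<and> length V = N}"
    by (auto simp: noise_vals_def R_def)
  moreover have "finite ({U. set U \<subseteq> R \<and> length U = N} \<times> {V. set V \<subseteq> {1::nat,2} \<and> length V = N})"
    by (intro finite_cartesian_product finite_lists_length_eq fR) auto
  ultimately show ?thesis by (rule finite_subset)
qed

theorem theorem3:
  fixes M :: "'a measure" and N \<kappa> :: nat and W :: "(nat \<times> nat) set" and \<alpha> \<beta> :: real
    and u :: "nat \<Rightarrow> nat \<Rightarrow> 'a \<Rightarrow> nat \<Rightarrow> nat" and v :: "nat \<Rightarrow> nat \<Rightarrow> 'a \<Rightarrow> nat"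
  assumes "W \<subseteq> {..<\<kappa>} \<times> {..<\<kappa>}"
    and "0 \<le> \<alpha>" and "\<alpha> \<le> 1" and "0 \<le> \<beta>" and "\<beta> \<le> 1"
    and "sir_noise M N \<alpha> \<beta> u v"
  shows "\<exists>(n::nat) (h::nat) (E :: nat \<Rightarrow> (nat \<times> nat) set) (\<mu> :: nat \<Rightarrow> real) (w :: nat \<Rightarrow> 'a \<Rightarrow> nat)
            (c :: nat list list \<times> nat list \<Rightarrow> nat) (enc :: nat list \<times> nat list \<Rightarrow> nat).
           stoch_digraph M n h E \<mu> w \<and>
           inj_on c (noise_vals N) \<and>
           (\<forall>k. \<forall>\<omega>\<in>space M. w k \<omega> = c (sir_noise_at N u v k \<omega>)) \<and>
           bij_betw enc (sir_states N \<kappa>) {..<n} \<and>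
           (\<forall>x\<in>sir_states N \<kappa>.
              bij_betw (\<lambda>X k \<omega>. if \<omega> \<in> space M then enc (X k \<omega>) else undefined)
                (sir_traj M N W u v x) (sd_paths M E w (enc x)))"
proof -
  note W = assms(1) and noise = assms(6)
  interpret P: prob_space M using noise by (simp add: sir_noise_def)
  define S where "S = sir_states N \<kappa>"
  obtain enc where enc0: "bij_betw enc S {0..<card S}"
    using ex_bij_betw_finite_nat[OF fin_states[of N \<kappa>]] unfolding S_def by blast
  hence enc: "bij_betw enc S {..<card S}" by (simp add: atLeast0LessThan)
  have enc_inj: "inj_on enc S" using enc by (simp add: bij_betw_def)
  define w where "w = (\<lambda>k \<omega>. to_nat (sir_noise_at N u v k \<omega>))"
  define h where "h = Suc (Max (to_nat ` noise_vals N))"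
  define E where "E = (\<lambda>s. {(enc x, enc y) | x y z. x \<in> S \<and> y \<in> S \<and> z \<in> noise_vals N \<and> to_nat z = s \<and> stepR W N z x y})"
  define \<mu> where "\<mu> = (\<lambda>s. measure M {\<omega> \<in> space M. w 0 \<omega> = s})"
  have SD: "stoch_digraph M (card S) h E \<mu> w"
    unfolding stoch_digraph_def
  proof (intro conjI allI ballI impI)
    show "prob_space M" by (rule P.prob_space_axioms)
  next
    fix s show "E s \<subseteq> {..<card S} \<times> {..<card S}"
      using enc unfolding E_def by (auto dest: bij_betwE)
  next
    fix k \<omega> assume "\<omega> \<in> space M"
    hence "sir_noise_at N u v k \<omega> \<in> noise_vals N" by (rule noise_at_vals[OF noise])
    hence "to_nat (sir_noise_at N u v k \<omega>) \<le> Max (to_nat ` noise_vals N)"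
      by (intro Max_ge finite_imageI fin_noise imageI)
    thus "w k \<omega> < h" unfolding w_def h_def by simp
  next
    show "P.indep_vars (\<lambda>_. count_space UNIV) w UNIV"
      unfolding w_def by (rule w_indep[OF noise])
  next
    fix k s show "measure M {\<omega> \<in> space M. w k \<omega> = s} = \<mu> s"
      unfolding \<mu>_def w_def by (rule w_dist[OF noise])
  qed
  have sets_eq: "sets (vimage_algebra (space M) (\<lambda>\<omega>. map (\<lambda>j. sir_noise_at N u v j \<omega>) [0..<Suc k]) (count_space UNIV))
      = sets (vimage_algebra (space M) (\<lambda>\<omega>. map (\<lambda>j. w j \<omega>) [0..<Suc k]) (count_space UNIV))" for k
    by (rule vimage_sets_eq[where g="map from_nat" and g'="map to_nat"]) (simp_all add: w_def)
  have meas_eq: "measurable (vimage_algebra (space M) (\<lambda>\<omega>. map (\<lambda>j. sir_noise_at N u v j \<omega>) [0..<Suc k]) (count_space UNIV)) (count_space UNIV)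
      = measurable (vimage_algebra (space M) (\<lambda>\<omega>. map (\<lambda>j. w j \<omega>) [0..<Suc k]) (count_space UNIV)) (count_space UNIV)" for k
    by (rule measurable_cong_sets[OF sets_eq refl])
  have paths: "bij_betw (\<lambda>X k \<omega>. if \<omega> \<in> space M then enc (X k \<omega>) else undefined)
                (sir_traj M N W u v x) (sd_paths M E w (enc x))" if xS: "x \<in> S" for x
  proof -
    let ?T = "sir_traj M N W u v x" and ?P = "sd_paths M E w (enc x)"
    let ?\<Phi> = "\<lambda>X k \<omega>. if \<omega> \<in> space M then enc (X k \<omega>) else undefined"
    have trajS: "X k \<omega> \<in> S" if "X \<in> ?T" "\<omega> \<in> space M" for X k \<omega>
    proof (induction k)
      case 0 thus ?case using that xS by (simp add: sir_traj_def)
    next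
      case (Suc k)
      hence len: "length (fst (X k \<omega>)) = N" by (simp add: S_def sir_states_def split: prod.splits)
      have "stepR W N (sir_noise_at N u v k \<omega>) (X k \<omega>) (X (Suc k) \<omega>)"
        unfolding step_iff[OF len] using that by (simp add: sir_traj_def)
      thus ?case using step_states[OF W _ noise_at_vals[OF noise that(2)]] Suc by (simp add: S_def)
    qed
    have fwd: "?\<Phi> X \<in> ?P" if XT: "X \<in> ?T" for X
      unfolding sd_paths_def
    proof (intro CollectI conjI allI ballI impI)
      fix \<omega> assume "\<omega> \<in> space M" thus "?\<Phi> X 0 \<omega> = enc x" using XT by (simp add: sir_traj_def)
    next
      fix k \<omega> assume om: "\<omega> \<in> space M"
      have a: "X k \<omega> \<in> S" "X (Suc k) \<omega> \<in> S" using trajS[OF XT om] by auto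
      hence len: "length (fst (X k \<omega>)) = N" by (simp add: S_def sir_states_def split: prod.splits)
      have st: "stepR W N (sir_noise_at N u v k \<omega>) (X k \<omega>) (X (Suc k) \<omega>)"
        unfolding step_iff[OF len] using XT om by (simp add: sir_traj_def)
      have "(enc (X k \<omega>), enc (X (Suc k) \<omega>)) \<in> E (w k \<omega>)"
        unfolding E_def w_def using a st noise_at_vals[OF noise om] by blast
      thus "(?\<Phi> X k \<omega>, ?\<Phi> X (Suc k) \<omega>) \<in> E (w k \<omega>)" using om by simp
    next
      fix k
      have mX: "X (Suc k) \<in> measurable (vimage_algebra (space M) (\<lambda>\<omega>. map (\<lambda>j. sir_noise_at N u v j \<omega>) [0..<Suc k]) (count_space UNIV)) (count_space UNIV)"
        using XT by (simp add: sir_traj_def)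
      have "?\<Phi> X (Suc k) \<in> measurable (vimage_algebra (space M) (\<lambda>\<omega>. map (\<lambda>j. sir_noise_at N u v j \<omega>) [0..<Suc k]) (count_space UNIV)) (count_space UNIV)"
        using meas_if_comp[OF mX, of enc] by simp
      thus "?\<Phi> X (Suc k) \<in> measurable (vimage_algebra (space M) (\<lambda>\<omega>. map (\<lambda>j. w j \<omega>) [0..<Suc k]) (count_space UNIV)) (count_space UNIV)"
        unfolding meas_eq[of k] .
    next
      fix k \<omega> assume "\<omega> \<notin> space M" thus "?\<Phi> X k \<omega> = undefined" by simp
    qed
    have inj: "inj_on ?\<Phi> ?T"
    proof (rule inj_onI)
      fix X X' assume XT: "X \<in> ?T" and XT': "X' \<in> ?T" and eq: "?\<Phi> X = ?\<Phi> X'"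
      show "X = X'"
      proof (intro ext)
        fix k \<omega>
        show "X k \<omega> = X' k \<omega>"
        proof (cases "\<omega> \<in> space M")
          case True
          have "enc (X k \<omega>) = enc (X' k \<omega>)" using fun_cong[OF fun_cong[OF eq, of k], of \<omega>] True by simp
          thus ?thesis using enc_inj trajS[OF XT True] trajS[OF XT' True] by (auto dest: inj_onD)
        next
          case False thus ?thesis using XT XT' by (simp add: sir_traj_def)
        qed
      qed
    qed
    have surj: "Y \<in> ?\<Phi> ` ?T" if YP: "Y \<in> ?P" for Y
    proof -
      have Yin: "Y k \<omega> \<in> enc ` S" if om: "\<omega> \<in> space M" for k \<omega>
      proof (cases k)
        case 0 thus ?thesis using YP om xS by (simp add: sd_paths_def)
      next
        case (Suc m)
        have "(Y m \<omega>, Y (Suc m) \<omega>) \<in> E (w m \<omega>)" using YP om by (simp add: sd_paths_def)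
        thus ?thesis unfolding E_def Suc by blast
      qed
      define X where "X = (\<lambda>k \<omega>. if \<omega> \<in> space M then the_inv_into S enc (Y k \<omega>) else undefined)"
      have encX: "enc (X k \<omega>) = Y k \<omega>" if "\<omega> \<in> space M" for k \<omega>
        using that Yin[OF that] enc_inj unfolding X_def by (auto intro: f_the_inv_into_f)
      have XS: "X k \<omega> \<in> S" if "\<omega> \<in> space M" for k \<omega>
        using that Yin[OF that] enc_inj unfolding X_def by (auto intro: the_inv_into_into)
      have Yundef: "Y k \<omega> = undefined" if "\<omega> \<notin> space M" for k \<omega>
        using YP that by (simp add: sd_paths_def)
      have "?\<Phi> X = Y"
        by (intro ext) (auto simp: encX Yundef)
      moreover have "X \<in> ?T"
        unfolding sir_traj_def mem_Collect_eq
      proof (intro conjI)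
        show "\<forall>\<omega>\<in>space M. X 0 \<omega> = x"
        proof
          fix \<omega> assume om: "\<omega> \<in> space M"
          have "Y 0 \<omega> = enc x" using YP om by (simp add: sd_paths_def)
          thus "X 0 \<omega> = x" using om xS enc_inj unfolding X_def by (simp add: the_inv_into_f_f)
        qed
      next
        show "\<forall>k. \<forall>\<omega>\<in>space M. length (fst (X (Suc k) \<omega>)) = N \<and> length (snd (X (Suc k) \<omega>)) = N \<and>
            (\<forall>i<N. snd (X (Suc k) \<omega>) ! i \<in> out_nbhd W (snd (X k \<omega>) ! i) \<and>
                   fst (X (Suc k) \<omega>) ! i =
                     sir_G i (fst (X k \<omega>)) (snd (X k \<omega>)) (u i k \<omega>) (v i k \<omega>))"
        proof (intro allI ballI)
          fix k \<omega> assume om: "\<omega> \<in> space M"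
          have "(Y k \<omega>, Y (Suc k) \<omega>) \<in> E (w k \<omega>)" using YP om by (simp add: sd_paths_def)
          then obtain x' y' z where xy: "Y k \<omega> = enc x'" "Y (Suc k) \<omega> = enc y'" "x' \<in> S" "y' \<in> S"
            "z \<in> noise_vals N" "to_nat z = w k \<omega>" "stepR W N z x' y'"
            unfolding E_def by blast
          have z: "z = sir_noise_at N u v k \<omega>" using xy(6) by (simp add: w_def)
          have "X k \<omega> = x'" using encX[OF om, of k] xy(1,3) XS[OF om, of k] enc_inj by (auto dest: inj_onD)
          moreover have "X (Suc k) \<omega> = y'" using encX[OF om, of "Suc k"] xy(2,4) XS[OF om, of "Suc k"] enc_inj by (auto dest: inj_onD)
          moreover have len: "length (fst x') = N" using xy(3) by (simp add: S_def sir_states_def split: prod.splits)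
          ultimately show "length (fst (X (Suc k) \<omega>)) = N \<and> length (snd (X (Suc k) \<omega>)) = N \<and>
              (\<forall>i<N. snd (X (Suc k) \<omega>) ! i \<in> out_nbhd W (snd (X k \<omega>) ! i) \<and>
                     fst (X (Suc k) \<omega>) ! i =
                       sir_G i (fst (X k \<omega>)) (snd (X k \<omega>)) (u i k \<omega>) (v i k \<omega>))"
            using xy(7) step_iff[OF len, of W u v k \<omega> y'] z by simp
        qed
      next
        show "\<forall>k. X (Suc k) \<in> measurable (vimage_algebra (space M) (\<lambda>\<omega>. map (\<lambda>j. sir_noise_at N u v j \<omega>) [0..<Suc k]) (count_space UNIV)) (count_space UNIV)"
        proof
          fix k
          have mY: "Y (Suc k) \<in> measurable (vimage_algebra (space M) (\<lambda>\<omega>. map (\<lambda>j. w j \<omega>) [0..<Suc k]) (count_space UNIV)) (count_space UNIV)"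
            using YP by (simp add: sd_paths_def)
          have mX: "X (Suc k) \<in> measurable (vimage_algebra (space M) (\<lambda>\<omega>. map (\<lambda>j. w j \<omega>) [0..<Suc k]) (count_space UNIV)) (count_space UNIV)"
            using meas_if_comp[OF mY, of "the_inv_into S enc"] unfolding X_def by simp
          thus "X (Suc k) \<in> measurable (vimage_algebra (space M) (\<lambda>\<omega>. map (\<lambda>j. sir_noise_at N u v j \<omega>) [0..<Suc k]) (count_space UNIV)) (count_space UNIV)"
            unfolding meas_eq[of k] .
        qed
      next
        show "\<forall>k \<omega>. \<omega> \<notin> space M \<longrightarrow> X k \<omega> = undefined" by (simp add: X_def)
      qed
      ultimately show ?thesis by blast
    qed
    show ?thesis unfolding bij_betw_def using inj fwd surj by blast
  qed
  show ?thesis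
    apply (rule exI[of _ "card S"], rule exI[of _ h], rule exI[of _ E], rule exI[of _ \<mu>], rule exI[of _ w],
           rule exI[of _ to_nat], rule exI[of _ enc])
    using SD enc paths unfolding S_def w_def by auto
qed

end
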